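(* Let $F=\mathbb{F}_q$ be a finite field of odd order $q$, and let $K/F$ be an extension of degree $3$. Then there exists a two-dimensional $F$-linear subspace $V\subset K$ such that whenever $y\in V$ and $y^2\in V$, we have $y=0$. Consequently $|V|=q^2=|K|^{2/3}$, and $V$ contains no $x,y\in K$ with $y\neq0$ such that $x,\,x+y,\,x+y^2\in V$. *)

theory Defs
  imports "HOL-Algebra.Algebra"
begin

end

theory Submission
  imports Defs
begin

lemma even_card_involution:
  "finite S \<Longrightarrow> (\<forall>x\<in>S. g x \<in> S \<and> g (g x) = x \<and> g x \<noteq> x) \<Longrightarrow> even (card S)"
proof (induction "card S" arbitrary: S rule: less_induct)
  case less
  show ?case
  proof (cases "S = {}")
    case True thus ?thesis by simp
  next
    case False then obtain x where x: "x \<in> S" by auto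
    let ?S' = "S - {x, g x}"
    have sub: "{x, g x} \<subseteq> S" using x less.prems by auto
    have c2: "card {x, g x} = 2" using x less.prems by auto
    have lt: "card ?S' < card S" using x less.prems by (intro psubset_card_mono) auto
    have "\<forall>y\<in>?S'. g y \<in> ?S' \<and> g (g y) = y \<and> g y \<noteq> y" using less.prems x by (auto, metis+)
    then have "even (card ?S')" using less.hyps[OF lt] less.prems by auto
    moreover have "card ?S' = card S - 2" using card_Diff_subset[OF _ sub] c2 by auto
    moreover have "card S \<ge> 2" using card_mono[OF less.prems(1) sub] c2 by auto
    ultimately show ?thesis by auto
  qed
qed

context field
begin

lemma one_plus_one_ne:
  assumes "subfield F R" "finite F" "odd (card F)"
  shows "\<one> \<oplus> \<one> \<noteq> \<zero>"
proof
  assume h: "\<one> \<oplus> \<one> = \<zero>"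
  have Fc: "F \<subseteq> carrier R" using subfieldE(3)[OF assms(1)] .
  have "\<forall>x\<in>F. x \<oplus> \<one> \<in> F \<and> (x \<oplus> \<one>) \<oplus> \<one> = x \<and> x \<oplus> \<one> \<noteq> x"
  proof
    fix x assume x: "x \<in> F"
    have xc: "x \<in> carrier R" using x Fc by auto
    have "(x \<oplus> \<one>) \<oplus> \<one> = x \<oplus> (\<one> \<oplus> \<one>)" using xc by (simp add: a_assoc)
    also have "\<dots> = x" using h xc by simp
    finally have 1: "(x \<oplus> \<one>) \<oplus> \<one> = x" .
    have 2: "x \<oplus> \<one> \<noteq> x" using xc by (metis add.l_cancel_one' one_closed one_not_zero)
    show "x \<oplus> \<one> \<in> F \<and> (x \<oplus> \<one>) \<oplus> \<one> = x \<and> x \<oplus> \<one> \<noteq> x"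
      using 1 2 x subringE(3,7)[OF subfieldE(1)[OF assms(1)]] by auto
  qed
  then have "even (card F)" using even_card_involution[OF assms(2), of "\<lambda>x. x \<oplus> \<one>"] by blast
  with assms(3) show False by simp
qed

lemma nonsquare_exists:
  assumes "subfield F R" "finite F" "odd (card F)"
  shows "\<exists>\<nu>\<in>F. \<nu> \<noteq> \<zero> \<and> (\<forall>s\<in>F. s \<otimes> s \<noteq> \<nu>)"
proof -
  have Fc: "F \<subseteq> carrier R" using subfieldE(3)[OF assms(1)] .
  have sr: "subring F R" using subfieldE(1)[OF assms(1)] .
  have ne: "\<one> \<noteq> \<ominus> \<one>"
  proof
    assume "\<one> = \<ominus> \<one>"
    then have "\<one> \<oplus> \<one> = \<ominus> \<one> \<oplus> \<one>" by simp
    also have "\<dots> = \<zero>" by (simp add: l_neg)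
    finally have "\<one> \<oplus> \<one> = \<zero>" .
    with one_plus_one_ne[OF assms] show False by simp
  qed
  have "\<not> F \<subseteq> (\<lambda>s. s \<otimes> s) ` F"
  proof
    assume "F \<subseteq> (\<lambda>s. s \<otimes> s) ` F"
    then have "inj_on (\<lambda>s. s \<otimes> s) F" using finite_surj_inj[OF assms(2)] by blast
    moreover have "\<one> \<in> F" "\<ominus> \<one> \<in> F" using subringE(3,5)[OF sr] by auto
    moreover have "\<one> \<otimes> \<one> = \<ominus> \<one> \<otimes> \<ominus> \<one>" using l_minus[of "\<one>" "\<ominus> \<one>"] by (simp add: add.inv_inv)
    ultimately show False using ne by (meson inj_onD)
  qed
  then obtain \<nu> where nu: "\<nu> \<in> F" "\<nu> \<notin> (\<lambda>s. s \<otimes> s) ` F" by blast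
  have z: "\<zero> \<in> F" using subringE(2)[OF sr] .
  have "\<nu> \<noteq> \<zero>"
  proof
    assume "\<nu> = \<zero>"
    then have "\<nu> = (\<lambda>s. s \<otimes> s) \<zero>" by simp
    with z nu(2) show False by blast
  qed
  moreover have "\<forall>s\<in>F. s \<otimes> s \<noteq> \<nu>" using nu(2) by blast
  ultimately show ?thesis using nu(1) by blast
qed

end

context field
begin

lemma span1_mem:
  assumes "K \<subseteq> carrier R" "a \<in> carrier R"
  shows "x \<in> Span K [a] \<longleftrightarrow> (\<exists>k\<in>K. x = k \<otimes> a)"
proof -
  have "\<forall>k\<in>K. k \<otimes> a \<oplus> \<zero> = k \<otimes> a" using assms by auto
  then show ?thesis by (auto simp: line_extension_mem_iff)
qed

lemma span2_mem:
  assumes "K \<subseteq> carrier R" "a \<in> carrier R" "b \<in> carrier R"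
  shows "x \<in> Span K [a, b] \<longleftrightarrow> (\<exists>k\<in>K. \<exists>l\<in>K. x = k \<otimes> a \<oplus> l \<otimes> b)"
proof -
  have S: "Span K [a, b] = line_extension K a (Span K [b])" by simp
  have "x \<in> Span K [a, b] \<longleftrightarrow> (\<exists>k\<in>K. \<exists>v\<in>Span K [b]. x = k \<otimes> a \<oplus> v)"
    unfolding S line_extension_mem_iff ..
  moreover have "\<forall>v. v \<in> Span K [b] \<longleftrightarrow> (\<exists>l\<in>K. v = l \<otimes> b)" using span1_mem[OF assms(1,3)] by blast
  ultimately show ?thesis by metis
qed

lemma span3_mem:
  assumes "K \<subseteq> carrier R" "a \<in> carrier R" "b \<in> carrier R" "c \<in> carrier R"
  shows "x \<in> Span K [a, b, c] \<longleftrightarrow> (\<exists>k\<in>K. \<exists>l\<in>K. \<exists>m\<in>K. x = k \<otimes> a \<oplus> l \<otimes> b \<oplus> m \<otimes> c)"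
proof -
  have S: "Span K [a, b, c] = line_extension K a (Span K [b, c])" by simp
  have "x \<in> Span K [a, b, c] \<longleftrightarrow> (\<exists>k\<in>K. \<exists>v\<in>Span K [b, c]. x = k \<otimes> a \<oplus> v)"
    unfolding S line_extension_mem_iff ..
  moreover have "\<forall>v. v \<in> Span K [b, c] \<longleftrightarrow> (\<exists>l\<in>K. \<exists>m\<in>K. v = l \<otimes> b \<oplus> m \<otimes> c)" using span2_mem[OF assms(1,3,4)] by blast
  moreover have "\<forall>k\<in>K. \<forall>l\<in>K. \<forall>m\<in>K. k \<otimes> a \<oplus> (l \<otimes> b \<oplus> m \<otimes> c) = k \<otimes> a \<oplus> l \<otimes> b \<oplus> m \<otimes> c"
  proof (intro ballI)
    fix k l m assume "k \<in> K" "l \<in> K" "m \<in> K"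
    then have "k \<in> carrier R" "l \<in> carrier R" "m \<in> carrier R" using assms(1) by auto
    then show "k \<otimes> a \<oplus> (l \<otimes> b \<oplus> m \<otimes> c) = k \<otimes> a \<oplus> l \<otimes> b \<oplus> m \<otimes> c"
      using assms by (simp add: a_assoc)
  qed
  ultimately show ?thesis by metis
qed

lemma coeff2:
  assumes K: "subfield K R" and ind: "independent K [x, y]"
    and ks: "a \<in> K" "b \<in> K" "a' \<in> K" "b' \<in> K"
    and eq: "a \<otimes> x \<oplus> b \<otimes> y = a' \<otimes> x \<oplus> b' \<otimes> y"
  shows "a = a' \<and> b = b'"
proof -
  have Kc: "K \<subseteq> carrier R" using subfieldE(3)[OF K] .
  have sr: "subring K R" using subfieldE(1)[OF K] .
  have xy: "x \<in> carrier R" "y \<in> carrier R" using independent_in_carrier[OF ind] by auto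
  have c: "a \<in> carrier R" "b \<in> carrier R" "a' \<in> carrier R" "b' \<in> carrier R" using ks Kc by auto
  have m: "a \<ominus> a' \<in> K" "b \<ominus> b' \<in> K" using ks subringE(5,7)[OF sr] unfolding a_minus_def by auto
  have "combine [a \<ominus> a', b \<ominus> b'] [x, y] = (a \<otimes> x \<oplus> b \<otimes> y) \<ominus> (a' \<otimes> x \<oplus> b' \<otimes> y)"
    using xy c by simp algebra
  also have "\<dots> = \<zero>" using eq xy c by simp
  finally have "set (take (length [x, y]) [a \<ominus> a', b \<ominus> b']) \<subseteq> {\<zero>}"
    using independent_imp_trivial_combine[OF K ind, of "[a \<ominus> a', b \<ominus> b']"] m by auto
  then have "a \<ominus> a' = \<zero>" "b \<ominus> b' = \<zero>" by auto
  then show ?thesis using c by (simp add: r_right_minus_eq)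
qed

lemma coeff3:
  assumes K: "subfield K R" and ind: "independent K [x, y, z]"
    and ks: "a \<in> K" "b \<in> K" "c \<in> K" "a' \<in> K" "b' \<in> K" "c' \<in> K"
    and eq: "a \<otimes> x \<oplus> b \<otimes> y \<oplus> c \<otimes> z = a' \<otimes> x \<oplus> b' \<otimes> y \<oplus> c' \<otimes> z"
  shows "a = a' \<and> b = b' \<and> c = c'"
proof -
  have Kc: "K \<subseteq> carrier R" using subfieldE(3)[OF K] .
  have sr: "subring K R" using subfieldE(1)[OF K] .
  have xy: "x \<in> carrier R" "y \<in> carrier R" "z \<in> carrier R" using independent_in_carrier[OF ind] by auto
  have cc: "a \<in> carrier R" "b \<in> carrier R" "c \<in> carrier R" "a' \<in> carrier R" "b' \<in> carrier R" "c' \<in> carrier R"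
    using ks Kc by auto
  have m: "a \<ominus> a' \<in> K" "b \<ominus> b' \<in> K" "c \<ominus> c' \<in> K" using ks subringE(5,7)[OF sr] unfolding a_minus_def by auto
  have "combine [a \<ominus> a', b \<ominus> b', c \<ominus> c'] [x, y, z] = (a \<otimes> x \<oplus> b \<otimes> y \<oplus> c \<otimes> z) \<ominus> (a' \<otimes> x \<oplus> b' \<otimes> y \<oplus> c' \<otimes> z)"
    using xy cc by simp algebra
  also have "\<dots> = \<zero>" using eq xy cc by simp
  finally have "set (take (length [x, y, z]) [a \<ominus> a', b \<ominus> b', c \<ominus> c']) \<subseteq> {\<zero>}"
    using independent_imp_trivial_combine[OF K ind, of "[a \<ominus> a', b \<ominus> b', c \<ominus> c']"] m by auto
  then have "a \<ominus> a' = \<zero>" "b \<ominus> b' = \<zero>" "c \<ominus> c' = \<zero>" by auto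
  then show ?thesis using cc by (simp add: r_right_minus_eq)
qed

end

context field
begin

lemma no_quadratic:
  assumes Fs: "subfield F R" and fin: "finite (carrier R)"
    and dim3: "dimension 3 F (carrier R)"
    and th: "\<theta> \<in> carrier R" and ind: "independent F [\<theta>, \<one>]"
    and sq: "\<theta> \<otimes> \<theta> \<in> Span F [\<theta>, \<one>]"
  shows False
proof -
  have Fc: "F \<subseteq> carrier R" using subfieldE(3)[OF Fs] .
  have sr: "subring F R" using subfieldE(1)[OF Fs] .
  define E where "E = Span F [\<theta>, \<one>]"
  have memE: "\<And>x. x \<in> E \<longleftrightarrow> (\<exists>a\<in>F. \<exists>b\<in>F. x = a \<otimes> \<theta> \<oplus> b \<otimes> \<one>)"
    unfolding E_def using span2_mem[OF Fc th one_closed] .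
  have Ec: "E \<subseteq> carrier R" unfolding E_def using Span_in_carrier[OF Fc, of "[\<theta>, \<one>]"] th by (simp del: Span.simps)
  obtain p r where pr: "p \<in> F" "r \<in> F" "\<theta> \<otimes> \<theta> = p \<otimes> \<theta> \<oplus> r \<otimes> \<one>"
    using sq memE unfolding E_def by blast
  have pc: "p \<in> carrier R" "r \<in> carrier R" using pr Fc by auto
  have Fcl: "\<And>a b. a \<in> F \<Longrightarrow> b \<in> F \<Longrightarrow> a \<oplus> b \<in> F"
            "\<And>a b. a \<in> F \<Longrightarrow> b \<in> F \<Longrightarrow> a \<otimes> b \<in> F"
            "\<And>a. a \<in> F \<Longrightarrow> \<ominus> a \<in> F"
            "\<zero> \<in> F" "\<one> \<in> F"
    using subringE(2,3,5,6,7)[OF sr] by auto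
  have mulE: "h1 \<otimes> h2 \<in> E" if hh: "h1 \<in> E" "h2 \<in> E" for h1 h2
  proof -
    obtain a b where ab: "a \<in> F" "b \<in> F" "h1 = a \<otimes> \<theta> \<oplus> b \<otimes> \<one>" using hh(1) memE by blast
    obtain c d where cd: "c \<in> F" "d \<in> F" "h2 = c \<otimes> \<theta> \<oplus> d \<otimes> \<one>" using hh(2) memE by blast
    have cc: "a \<in> carrier R" "b \<in> carrier R" "c \<in> carrier R" "d \<in> carrier R" using ab cd Fc by auto
    have "h1 \<otimes> h2 = (a \<otimes> c) \<otimes> (\<theta> \<otimes> \<theta>) \<oplus> (a \<otimes> d \<oplus> b \<otimes> c) \<otimes> \<theta> \<oplus> (b \<otimes> d) \<otimes> \<one>"
      unfolding ab(3) cd(3) using cc th by algebra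
    also have "\<dots> = (a \<otimes> c \<otimes> p \<oplus> (a \<otimes> d \<oplus> b \<otimes> c)) \<otimes> \<theta> \<oplus> (a \<otimes> c \<otimes> r \<oplus> b \<otimes> d) \<otimes> \<one>"
      unfolding pr(3) using cc th pc by algebra
    finally have eq: "h1 \<otimes> h2 = (a \<otimes> c \<otimes> p \<oplus> (a \<otimes> d \<oplus> b \<otimes> c)) \<otimes> \<theta> \<oplus> (a \<otimes> c \<otimes> r \<oplus> b \<otimes> d) \<otimes> \<one>" .
    have "a \<otimes> c \<otimes> p \<oplus> (a \<otimes> d \<oplus> b \<otimes> c) \<in> F" "a \<otimes> c \<otimes> r \<oplus> b \<otimes> d \<in> F"
      using ab cd pr by (simp_all add: Fcl)
    then show ?thesis using eq memE by blast
  qed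
  have addE: "h1 \<oplus> h2 \<in> E" if hh: "h1 \<in> E" "h2 \<in> E" for h1 h2
  proof -
    obtain a b where ab: "a \<in> F" "b \<in> F" "h1 = a \<otimes> \<theta> \<oplus> b \<otimes> \<one>" using hh(1) memE by blast
    obtain c d where cd: "c \<in> F" "d \<in> F" "h2 = c \<otimes> \<theta> \<oplus> d \<otimes> \<one>" using hh(2) memE by blast
    have cc: "a \<in> carrier R" "b \<in> carrier R" "c \<in> carrier R" "d \<in> carrier R" using ab cd Fc by auto
    have "h1 \<oplus> h2 = (a \<oplus> c) \<otimes> \<theta> \<oplus> (b \<oplus> d) \<otimes> \<one>"
      unfolding ab(3) cd(3) using cc th by algebra
    moreover have "a \<oplus> c \<in> F" "b \<oplus> d \<in> F" using ab cd by (simp_all add: Fcl)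
    ultimately show ?thesis using memE by blast
  qed
  have negE: "\<ominus> h \<in> E" if hh: "h \<in> E" for h
  proof -
    obtain a b where ab: "a \<in> F" "b \<in> F" "h = a \<otimes> \<theta> \<oplus> b \<otimes> \<one>" using hh(1) memE by blast
    have cc: "a \<in> carrier R" "b \<in> carrier R" using ab Fc by auto
    have "\<ominus> h = (\<ominus> a) \<otimes> \<theta> \<oplus> (\<ominus> b) \<otimes> \<one>"
      unfolding ab(3) using cc th by algebra
    moreover have "\<ominus> a \<in> F" "\<ominus> b \<in> F" using ab by (simp_all add: Fcl)
    ultimately show ?thesis using memE by blast
  qed
  have oneE: "\<one> \<in> E" proof -
    have "\<one> = \<zero> \<otimes> \<theta> \<oplus> \<one> \<otimes> \<one>" using th by simp
    then show ?thesis using memE Fcl by blast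
  qed
  have finE: "finite E" using Ec fin finite_subset by auto
  have subE: "subring E R" using subringI[OF Ec oneE negE mulE addE] .
  have invE: "inv k \<in> E" if k: "k \<in> E - {\<zero>}" for k
  proof -
    have kc: "k \<in> carrier R" "k \<noteq> \<zero>" using k Ec by auto
    have "(\<lambda>f. k \<otimes> f) ` E \<subseteq> E" using mulE k by auto
    moreover have "inj_on (\<lambda>f. k \<otimes> f) E"
      using m_lcancel[OF kc(2) kc(1)] Ec by (auto intro: inj_onI)
    ultimately have "(\<lambda>f. k \<otimes> f) ` E = E" using endo_inj_surj[OF finE] by auto
    then obtain f where f: "f \<in> E" "k \<otimes> f = \<one>" using oneE by (metis imageE)
    have "inv k = f" using comm_inv_char[OF kc(1) _ f(2)] f(1) Ec by auto
    then show ?thesis using f by simp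
  qed
  have EF: "subfield E R" using subfieldI'[OF subE invE] by blast
  have FE: "F \<subseteq> E"
  proof
    fix k assume k: "k \<in> F"
    have "k = \<zero> \<otimes> \<theta> \<oplus> k \<otimes> \<one>" using k Fc th by auto
    then show "k \<in> E" using memE k Fcl by blast
  qed
  have "dimension (length [\<theta>, \<one>]) F E" unfolding E_def by (rule dimension_independent[OF ind])
  then have dimE: "dimension 2 F E" by (simp add: numeral_2_eq_2)
  obtain Bs where Bs: "set Bs \<subseteq> carrier R" "independent F Bs" "length Bs = 3" "Span F Bs = carrier R"
    using exists_base[OF Fs dim3] by blast
  have "Span F Bs \<subseteq> Span E Bs"
  proof (rule Span_min[OF Fs Bs(1) Span_is_add_subgroup[OF EF Bs(1)]])
    have "F <#> set Bs \<subseteq> E <#> set Bs" using FE unfolding set_mult_def by blast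
    then show "F <#> set Bs \<subseteq> Span E Bs" using Span_incl[OF EF Bs(1)] by blast
  qed
  moreover have "Span E Bs \<subseteq> carrier R" using Span_in_carrier[OF Ec Bs(1)] .
  ultimately have SE: "Span E Bs = carrier R" using Bs(4) by blast
  obtain Vs where Vs: "set Vs \<subseteq> carrier R" "independent E Vs" "Span E Vs = Span E Bs"
    using filter_base[OF EF Bs(1)] by blast
  have "dimension (length Vs) E (carrier R)" using dimension_independent[OF Vs(2)] Vs(3) SE by simp
  then have "dimension (2 * length Vs) F (carrier R)" using telescopic_base[OF Fs EF dimE] by blast
  then have "2 * length Vs = 3" using dimension_is_inj[OF Fs _ dim3] by blast
  then show False by presburger
qed

end

context field
begin

lemma exists_gen:
  assumes Fs: "subfield F R" and fin: "finite (carrier R)"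
    and dim3: "dimension 3 F (carrier R)"
  shows "\<exists>\<theta>\<in>carrier R. independent F [\<theta> \<otimes> \<theta>, \<theta>, \<one>]"
proof -
  have Fc: "F \<subseteq> carrier R" using subfieldE(3)[OF Fs] .
  have i1: "independent F [\<one>]" by (rule li_Cons) auto
  have d1: "dimension 1 F (Span F [\<one>])" using dimension_independent[OF i1] by simp
  have ne: "Span F [\<one>] \<noteq> carrier R"
  proof
    assume "Span F [\<one>] = carrier R"
    then have "dimension 1 F (carrier R)" using d1 by simp
    then have "(1::nat) = 3" using dimension_is_inj[OF Fs _ dim3] by blast
    then show False by simp
  qed
  moreover have "Span F [\<one>] \<subseteq> carrier R" using Span_in_carrier[OF Fc, of "[\<one>]"] by (simp del: Span.simps)
  ultimately obtain \<theta> where th: "\<theta> \<in> carrier R" "\<theta> \<notin> Span F [\<one>]" by blast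
  have i2: "independent F [\<theta>, \<one>]" using li_Cons[OF th i1] .
  have "\<theta> \<otimes> \<theta> \<notin> Span F [\<theta>, \<one>]" using no_quadratic[OF Fs fin dim3 th(1) i2] by blast
  then have "independent F [\<theta> \<otimes> \<theta>, \<theta>, \<one>]" using li_Cons[OF _ _ i2] th(1) by blast
  then show ?thesis using th(1) by blast
qed

end

theorem theorem5p1:
  fixes R :: "('a, 'b) ring_scheme" (structure) and F :: "'a set"
  assumes "field R"
    and "finite (carrier R)"
    and "subfield F R"
    and "odd (card F)"
    and "ring.dimension R 3 F (carrier R)"
  shows "\<exists>V. subalgebra F V R \<and> ring.dimension R 2 F V
           \<and> (\<forall>y\<in>V. y \<otimes> y \<in> V \<longrightarrow> y = \<zero>)
           \<and> card V = card F ^ 2 \<and> card V ^ 3 = card (carrier R) ^ 2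
           \<and> \<not> (\<exists>x\<in>carrier R. \<exists>y\<in>carrier R. y \<noteq> \<zero> \<and> x \<in> V \<and> x \<oplus> y \<in> V \<and> x \<oplus> y \<otimes> y \<in> V)"
proof -
  interpret R: field R by fact
  note Fs = assms(3)
  have Fc: "F \<subseteq> carrier R" using subfieldE(3)[OF Fs] .
  have finF: "finite F" using Fc assms(2) finite_subset by auto
  have sr: "subring F R" using subfieldE(1)[OF Fs] .
  have Fcl: "\<And>a b. a \<in> F \<Longrightarrow> b \<in> F \<Longrightarrow> a \<oplus> b \<in> F"
            "\<And>a b. a \<in> F \<Longrightarrow> b \<in> F \<Longrightarrow> a \<otimes> b \<in> F"
            "\<And>a. a \<in> F \<Longrightarrow> \<ominus> a \<in> F"
            "\<zero> \<in> F" "\<one> \<in> F"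
    using subringE(2,3,5,6,7)[OF sr] by auto
  have Fmin: "\<And>a b. a \<in> F \<Longrightarrow> b \<in> F \<Longrightarrow> a \<ominus> b \<in> F" unfolding a_minus_def using Fcl by auto
  have Fc': "\<And>a. a \<in> F \<Longrightarrow> a \<in> carrier R" using Fc by auto
  obtain \<nu> where nu: "\<nu> \<in> F" "\<nu> \<noteq> \<zero>" "\<forall>s\<in>F. s \<otimes> s \<noteq> \<nu>"
    using R.nonsquare_exists[OF Fs finF assms(4)] by blast
  obtain \<theta> where th: "\<theta> \<in> carrier R" and ind3: "R.independent F [\<theta> \<otimes> \<theta>, \<theta>, \<one>]"
    using R.exists_gen[OF Fs assms(2) assms(5)] by blast
  have thth: "\<theta> \<otimes> \<theta> \<in> carrier R" using th by simp
  have span3: "R.Span F [\<theta> \<otimes> \<theta>, \<theta>, \<one>] = carrier R"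
    using R.independent_length_eq_dimension[OF Fs assms(5) ind3] th by simp
  have mem3: "\<And>x. x \<in> carrier R \<longleftrightarrow> (\<exists>a\<in>F. \<exists>b\<in>F. \<exists>c\<in>F. x = a \<otimes> (\<theta> \<otimes> \<theta>) \<oplus> b \<otimes> \<theta> \<oplus> c \<otimes> \<one>)"
    using R.span3_mem[OF Fc thth th R.one_closed] span3 by blast
  have coeff: "\<And>a b c a' b' c'. a \<in> F \<Longrightarrow> b \<in> F \<Longrightarrow> c \<in> F \<Longrightarrow> a' \<in> F \<Longrightarrow> b' \<in> F \<Longrightarrow> c' \<in> F \<Longrightarrow>
      a \<otimes> (\<theta> \<otimes> \<theta>) \<oplus> b \<otimes> \<theta> \<oplus> c \<otimes> \<one> = a' \<otimes> (\<theta> \<otimes> \<theta>) \<oplus> b' \<otimes> \<theta> \<oplus> c' \<otimes> \<one> \<Longrightarrow> a = a' \<and> b = b' \<and> c = c'"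
    using R.coeff3[OF Fs ind3] by blast
  obtain c2 c1 c0 where cs: "c2 \<in> F" "c1 \<in> F" "c0 \<in> F"
    and cube: "\<theta> \<otimes> (\<theta> \<otimes> \<theta>) = c2 \<otimes> (\<theta> \<otimes> \<theta>) \<oplus> c1 \<otimes> \<theta> \<oplus> c0 \<otimes> \<one>"
    using mem3[of "\<theta> \<otimes> (\<theta> \<otimes> \<theta>)"] th by auto
  have csc: "c2 \<in> carrier R" "c1 \<in> carrier R" "c0 \<in> carrier R" "\<nu> \<in> carrier R" using cs nu Fc by auto
  define w where "w = \<nu> \<otimes> (\<theta> \<otimes> \<theta>) \<oplus> (c0 \<ominus> \<nu> \<otimes> c2) \<otimes> \<theta> \<oplus> (\<nu> \<otimes> \<nu>) \<otimes> \<one>"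
  have wc: "w \<in> carrier R" unfolding w_def using th csc by simp
  have wth: "w \<otimes> \<theta> = c0 \<otimes> (\<theta> \<otimes> \<theta>) \<oplus> (\<nu> \<otimes> c1 \<oplus> \<nu> \<otimes> \<nu>) \<otimes> \<theta> \<oplus> (\<nu> \<otimes> c0) \<otimes> \<one>"
  proof -
    have "w \<otimes> \<theta> = \<nu> \<otimes> (\<theta> \<otimes> (\<theta> \<otimes> \<theta>)) \<oplus> (c0 \<ominus> \<nu> \<otimes> c2) \<otimes> (\<theta> \<otimes> \<theta>) \<oplus> (\<nu> \<otimes> \<nu>) \<otimes> \<theta>"
      unfolding w_def using th csc by algebra
    also have "\<dots> = c0 \<otimes> (\<theta> \<otimes> \<theta>) \<oplus> (\<nu> \<otimes> c1 \<oplus> \<nu> \<otimes> \<nu>) \<otimes> \<theta> \<oplus> (\<nu> \<otimes> c0) \<otimes> \<one>"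
      unfolding cube using th csc by algebra
    finally show ?thesis .
  qed
  have w0: "w \<noteq> \<zero>"
  proof
    assume "w = \<zero>"
    then have "\<nu> \<otimes> (\<theta> \<otimes> \<theta>) \<oplus> (c0 \<ominus> \<nu> \<otimes> c2) \<otimes> \<theta> \<oplus> (\<nu> \<otimes> \<nu>) \<otimes> \<one>
       = \<zero> \<otimes> (\<theta> \<otimes> \<theta>) \<oplus> \<zero> \<otimes> \<theta> \<oplus> \<zero> \<otimes> \<one>" unfolding w_def using th by simp
    moreover have "c0 \<ominus> \<nu> \<otimes> c2 \<in> F" "\<nu> \<otimes> \<nu> \<in> F" using cs nu Fcl Fmin by auto
    ultimately have "\<nu> = \<zero>" using coeff[of \<nu> "c0 \<ominus> \<nu> \<otimes> c2" "\<nu> \<otimes> \<nu>" \<zero> \<zero> \<zero>] nu(1) Fcl(4) by blast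
    with nu(2) show False by simp
  qed
  have wU: "w \<in> Units R" using R.field_Units wc w0 by auto
  define u where "u = inv w"
  have uc: "u \<in> carrier R" unfolding u_def using wU by simp
  have wu: "w \<otimes> u = \<one>" unfolding u_def using wU by simp
  have u0: "u \<noteq> \<zero>" using wu wc by auto
  have thu: "\<theta> \<otimes> u \<in> carrier R" using th uc by simp
  define V where "V = R.Span F [\<theta> \<otimes> u, u]"
  have memV: "\<And>y. y \<in> V \<longleftrightarrow> (\<exists>s\<in>F. \<exists>t\<in>F. y = s \<otimes> (\<theta> \<otimes> u) \<oplus> t \<otimes> u)"
    unfolding V_def using R.span2_mem[OF Fc thu uc] .
  have key: "(s \<otimes> (\<theta> \<otimes> u) \<oplus> t \<otimes> u) \<otimes> w = s \<otimes> \<theta> \<oplus> t \<otimes> \<one>" if st: "s \<in> F" "t \<in> F" for s t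
  proof -
    have sc: "s \<in> carrier R" "t \<in> carrier R" using st Fc by auto
    have "(s \<otimes> (\<theta> \<otimes> u) \<oplus> t \<otimes> u) \<otimes> w = s \<otimes> \<theta> \<otimes> (w \<otimes> u) \<oplus> t \<otimes> (w \<otimes> u)"
      using sc th uc wc by algebra
    then show ?thesis using wu sc th by simp
  qed
  have i0: "R.independent F [u]" by (rule R.li_Cons) (use uc u0 in auto)
  have "\<theta> \<otimes> u \<notin> R.Span F [u]"
  proof
    assume "\<theta> \<otimes> u \<in> R.Span F [u]"
    then obtain k where k: "k \<in> F" "\<theta> \<otimes> u = k \<otimes> u" using R.span1_mem[OF Fc uc] by blast
    have kc: "k \<in> carrier R" using k Fc by auto
    have "\<theta> = \<theta> \<otimes> (w \<otimes> u)" using th wu by simp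
    also have "\<dots> = (\<theta> \<otimes> u) \<otimes> w" using th uc wc by algebra
    also have "\<dots> = k \<otimes> (w \<otimes> u)" unfolding k(2) using kc uc wc by algebra
    also have "\<dots> = k" using wu kc by simp
    finally have "\<zero> \<otimes> (\<theta> \<otimes> \<theta>) \<oplus> \<one> \<otimes> \<theta> \<oplus> \<zero> \<otimes> \<one> = \<zero> \<otimes> (\<theta> \<otimes> \<theta>) \<oplus> \<zero> \<otimes> \<theta> \<oplus> k \<otimes> \<one>"
      using th kc by simp
    then have "\<one> = \<zero>" using coeff[of \<zero> \<one> \<zero> \<zero> \<zero> k] k(1) Fcl(4,5) by blast
    then show False by simp
  qed
  then have indV: "R.independent F [\<theta> \<otimes> u, u]" using R.li_Cons[OF thu _ i0] by blast
  have subV: "subalgebra F V R" unfolding V_def using R.Span_is_subalgebra[OF Fs, of "[\<theta> \<otimes> u, u]"] thu uc by (simp del: R.Span.simps)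
  have "R.dimension (length [\<theta> \<otimes> u, u]) F V" unfolding V_def by (rule R.dimension_independent[OF indV])
  then have dimV: "R.dimension 2 F V" by (simp add: numeral_2_eq_2)
  have P: "\<forall>y\<in>V. y \<otimes> y \<in> V \<longrightarrow> y = \<zero>"
  proof (intro ballI impI)
    fix y assume y: "y \<in> V" and yy: "y \<otimes> y \<in> V"
    obtain s t where st: "s \<in> F" "t \<in> F" "y = s \<otimes> (\<theta> \<otimes> u) \<oplus> t \<otimes> u" using y memV by blast
    obtain a b where ab: "a \<in> F" "b \<in> F" "y \<otimes> y = a \<otimes> (\<theta> \<otimes> u) \<oplus> b \<otimes> u" using yy memV by blast
    have stc: "s \<in> carrier R" "t \<in> carrier R" "a \<in> carrier R" "b \<in> carrier R" using st ab Fc by auto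
    have yc: "y \<in> carrier R" using st(3) stc thu uc by simp
    have yw: "y \<otimes> w = s \<otimes> \<theta> \<oplus> t \<otimes> \<one>" using key[OF st(1,2)] st(3) by simp
    have yyw: "(y \<otimes> y) \<otimes> w = a \<otimes> \<theta> \<oplus> b \<otimes> \<one>" using key[OF ab(1,2)] ab(3) by simp
    have "(y \<otimes> y) \<otimes> (w \<otimes> w) = (y \<otimes> w) \<otimes> (y \<otimes> w)" using yc wc by algebra
    also have "\<dots> = (s \<otimes> s) \<otimes> (\<theta> \<otimes> \<theta>) \<oplus> (s \<otimes> t \<oplus> s \<otimes> t) \<otimes> \<theta> \<oplus> (t \<otimes> t) \<otimes> \<one>"
      unfolding yw using stc th by algebra
    finally have e1: "(y \<otimes> y) \<otimes> (w \<otimes> w) = (s \<otimes> s) \<otimes> (\<theta> \<otimes> \<theta>) \<oplus> (s \<otimes> t \<oplus> s \<otimes> t) \<otimes> \<theta> \<oplus> (t \<otimes> t) \<otimes> \<one>" .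
    have "(y \<otimes> y) \<otimes> (w \<otimes> w) = ((y \<otimes> y) \<otimes> w) \<otimes> w" using yc wc by algebra
    also have "\<dots> = a \<otimes> (w \<otimes> \<theta>) \<oplus> b \<otimes> w" unfolding yyw using stc th wc by algebra
    also have "\<dots> = (a \<otimes> c0 \<oplus> b \<otimes> \<nu>) \<otimes> (\<theta> \<otimes> \<theta>) \<oplus> (a \<otimes> (\<nu> \<otimes> c1 \<oplus> \<nu> \<otimes> \<nu>) \<oplus> b \<otimes> (c0 \<ominus> \<nu> \<otimes> c2)) \<otimes> \<theta>
        \<oplus> (a \<otimes> (\<nu> \<otimes> c0) \<oplus> b \<otimes> (\<nu> \<otimes> \<nu>)) \<otimes> \<one>"
      unfolding wth unfolding w_def using stc th csc by algebra
    finally have e2: "(y \<otimes> y) \<otimes> (w \<otimes> w) = (a \<otimes> c0 \<oplus> b \<otimes> \<nu>) \<otimes> (\<theta> \<otimes> \<theta>) \<oplus> (a \<otimes> (\<nu> \<otimes> c1 \<oplus> \<nu> \<otimes> \<nu>) \<oplus> b \<otimes> (c0 \<ominus> \<nu> \<otimes> c2)) \<otimes> \<theta>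
        \<oplus> (a \<otimes> (\<nu> \<otimes> c0) \<oplus> b \<otimes> (\<nu> \<otimes> \<nu>)) \<otimes> \<one>" .
    have inF: "s \<otimes> s \<in> F" "s \<otimes> t \<oplus> s \<otimes> t \<in> F" "t \<otimes> t \<in> F" "a \<otimes> c0 \<oplus> b \<otimes> \<nu> \<in> F"
      "a \<otimes> (\<nu> \<otimes> c1 \<oplus> \<nu> \<otimes> \<nu>) \<oplus> b \<otimes> (c0 \<ominus> \<nu> \<otimes> c2) \<in> F" "a \<otimes> (\<nu> \<otimes> c0) \<oplus> b \<otimes> (\<nu> \<otimes> \<nu>) \<in> F"
      using st ab cs nu(1) by (simp_all add: Fcl Fmin)
    have eq12: "(s \<otimes> s) \<otimes> (\<theta> \<otimes> \<theta>) \<oplus> (s \<otimes> t \<oplus> s \<otimes> t) \<otimes> \<theta> \<oplus> (t \<otimes> t) \<otimes> \<one>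
       = (a \<otimes> c0 \<oplus> b \<otimes> \<nu>) \<otimes> (\<theta> \<otimes> \<theta>) \<oplus> (a \<otimes> (\<nu> \<otimes> c1 \<oplus> \<nu> \<otimes> \<nu>) \<oplus> b \<otimes> (c0 \<ominus> \<nu> \<otimes> c2)) \<otimes> \<theta>
        \<oplus> (a \<otimes> (\<nu> \<otimes> c0) \<oplus> b \<otimes> (\<nu> \<otimes> \<nu>)) \<otimes> \<one>"
      using e1 e2 by (rule trans[OF sym])
    have cmp: "s \<otimes> s = a \<otimes> c0 \<oplus> b \<otimes> \<nu>" "t \<otimes> t = a \<otimes> (\<nu> \<otimes> c0) \<oplus> b \<otimes> (\<nu> \<otimes> \<nu>)"
      using coeff[OF inF(1,2,3,4,5,6) eq12] by auto
    have tt: "t \<otimes> t = \<nu> \<otimes> (s \<otimes> s)" unfolding cmp using stc csc by algebra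
    show "y = \<zero>"
    proof (cases "s = \<zero>")
      case True
      then have "t \<otimes> t = \<zero>" using tt csc by simp
      then have "t = \<zero>" using R.integral_iff stc by auto
      then show ?thesis using st(3) True thu uc by simp
    next
      case False
      have si: "inv s \<in> F" "s \<otimes> inv s = \<one>" using R.subfield_m_inv[OF Fs, of s] st(1) False by auto
      have sic: "inv s \<in> carrier R" using si Fc by auto
      have rF: "t \<otimes> inv s \<in> F" using st(2) si(1) Fcl by auto
      have "(t \<otimes> inv s) \<otimes> (t \<otimes> inv s) = (t \<otimes> t) \<otimes> (inv s \<otimes> inv s)" using stc sic by algebra
      also have "\<dots> = \<nu> \<otimes> ((s \<otimes> inv s) \<otimes> (s \<otimes> inv s))" unfolding tt using stc sic csc by algebra
      also have "\<dots> = \<nu>" using si csc by simp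
      finally show ?thesis using nu(3) rF by blast
    qed
  qed
  have cardV: "card V = card F ^ 2"
  proof -
    define f where "f = (\<lambda>p. fst p \<otimes> (\<theta> \<otimes> u) \<oplus> snd p \<otimes> u)"
    have "V = f ` (F \<times> F)"
    proof
      show "V \<subseteq> f ` (F \<times> F)"
      proof
        fix y assume "y \<in> V"
        then obtain s t where st: "s \<in> F" "t \<in> F" "y = s \<otimes> (\<theta> \<otimes> u) \<oplus> t \<otimes> u" using memV by blast
        then have "y = f (s, t)" unfolding f_def by simp
        then show "y \<in> f ` (F \<times> F)" using st(1,2) by blast
      qed
      show "f ` (F \<times> F) \<subseteq> V"
      proof
        fix y assume "y \<in> f ` (F \<times> F)"
        then obtain s t where st: "s \<in> F" "t \<in> F" "y = f (s, t)" by blast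
        then have "y = s \<otimes> (\<theta> \<otimes> u) \<oplus> t \<otimes> u" unfolding f_def by simp
        then show "y \<in> V" using memV st(1,2) by blast
      qed
    qed
    moreover have "inj_on f (F \<times> F)"
    proof (rule inj_onI)
      fix p q assume p: "p \<in> F \<times> F" and q: "q \<in> F \<times> F" and e: "f p = f q"
      obtain s t where ps: "p = (s, t)" by (cases p)
      obtain s' t' where qs: "q = (s', t')" by (cases q)
      have "s \<otimes> (\<theta> \<otimes> u) \<oplus> t \<otimes> u = s' \<otimes> (\<theta> \<otimes> u) \<oplus> t' \<otimes> u" using e unfolding f_def ps qs by simp
      moreover have "s \<in> F" "t \<in> F" "s' \<in> F" "t' \<in> F" using p q ps qs by auto
      ultimately have "s = s' \<and> t = t'" using R.coeff2[OF Fs indV] by blast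
      then show "p = q" using ps qs by simp
    qed
    ultimately have "card V = card (F \<times> F)" using card_image by metis
    then show ?thesis by (simp add: card_cartesian_product power2_eq_square)
  qed
  have cardR: "card (carrier R) = card F ^ 3"
  proof -
    define f where "f = (\<lambda>p. fst p \<otimes> (\<theta> \<otimes> \<theta>) \<oplus> fst (snd p) \<otimes> \<theta> \<oplus> snd (snd p) \<otimes> \<one>)"
    have "carrier R = f ` (F \<times> F \<times> F)"
    proof
      show "carrier R \<subseteq> f ` (F \<times> F \<times> F)"
      proof
        fix y assume "y \<in> carrier R"
        then obtain a b c where st: "a \<in> F" "b \<in> F" "c \<in> F" "y = a \<otimes> (\<theta> \<otimes> \<theta>) \<oplus> b \<otimes> \<theta> \<oplus> c \<otimes> \<one>"
          using mem3 by blast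
        then have "y = f (a, b, c)" unfolding f_def by simp
        then show "y \<in> f ` (F \<times> F \<times> F)" using st(1,2,3) by blast
      qed
      show "f ` (F \<times> F \<times> F) \<subseteq> carrier R"
      proof
        fix y assume "y \<in> f ` (F \<times> F \<times> F)"
        then obtain a b c where st: "a \<in> F" "b \<in> F" "c \<in> F" "y = f (a, b, c)" by blast
        then have "y = a \<otimes> (\<theta> \<otimes> \<theta>) \<oplus> b \<otimes> \<theta> \<oplus> c \<otimes> \<one>" unfolding f_def by simp
        then show "y \<in> carrier R" using mem3 st(1,2,3) by blast
      qed
    qed
    moreover have "inj_on f (F \<times> F \<times> F)"
    proof (rule inj_onI)
      fix p q assume p: "p \<in> F \<times> F \<times> F" and q: "q \<in> F \<times> F \<times> F" and e: "f p = f q"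
      obtain a b c where ps: "p = (a, b, c)" by (cases p) auto
      obtain a' b' c' where qs: "q = (a', b', c')" by (cases q) auto
      have "a \<otimes> (\<theta> \<otimes> \<theta>) \<oplus> b \<otimes> \<theta> \<oplus> c \<otimes> \<one> = a' \<otimes> (\<theta> \<otimes> \<theta>) \<oplus> b' \<otimes> \<theta> \<oplus> c' \<otimes> \<one>"
        using e unfolding f_def ps qs by simp
      moreover have "a \<in> F" "b \<in> F" "c \<in> F" "a' \<in> F" "b' \<in> F" "c' \<in> F" using p q ps qs by auto
      ultimately have "a = a' \<and> b = b' \<and> c = c'" using coeff by blast
      then show "p = q" using ps qs by simp
    qed
    ultimately have "card (carrier R) = card (F \<times> F \<times> F)" using card_image by metis
    then show ?thesis by (simp add: card_cartesian_product power3_eq_cube)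
  qed
  have last: "\<not> (\<exists>x\<in>carrier R. \<exists>y\<in>carrier R. y \<noteq> \<zero> \<and> x \<in> V \<and> x \<oplus> y \<in> V \<and> x \<oplus> y \<otimes> y \<in> V)"
  proof
    assume "\<exists>x\<in>carrier R. \<exists>y\<in>carrier R. y \<noteq> \<zero> \<and> x \<in> V \<and> x \<oplus> y \<in> V \<and> x \<oplus> y \<otimes> y \<in> V"
    then obtain x y where xy: "x \<in> carrier R" "y \<in> carrier R" "y \<noteq> \<zero>" "x \<in> V" "x \<oplus> y \<in> V" "x \<oplus> y \<otimes> y \<in> V" by blast
    have sg: "subgroup V (add_monoid R)" using subalgebra.axioms(1)[OF subV] .
    have Vc: "V \<subseteq> carrier R" using R.subalgebra_in_carrier[OF subV] .
    have addV: "\<And>a b. a \<in> V \<Longrightarrow> b \<in> V \<Longrightarrow> a \<oplus> b \<in> V" using subgroup.m_closed[OF sg] by simp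
    have negV: "\<ominus> a \<in> V" if a: "a \<in> V" for a
    proof -
      have "\<ominus> \<one> \<otimes> a \<in> V" using subalgebra.smult_closed[OF subV] Fcl(3,5) a by blast
      moreover have "\<ominus> \<one> \<otimes> a = \<ominus> a" using a Vc by (simp add: R.l_minus subsetD)
      ultimately show ?thesis by simp
    qed
    have "(x \<oplus> y) \<oplus> \<ominus> x \<in> V" using addV negV xy by blast
    moreover have "(x \<oplus> y) \<oplus> \<ominus> x = y" using xy(1,2) by algebra
    ultimately have yV: "y \<in> V" by simp
    have "(x \<oplus> y \<otimes> y) \<oplus> \<ominus> x \<in> V" using addV negV xy by blast
    moreover have "(x \<oplus> y \<otimes> y) \<oplus> \<ominus> x = y \<otimes> y" using xy(1,2) by algebra
    ultimately have "y \<otimes> y \<in> V" by simp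
    then show False using P yV xy(3) by blast
  qed
  show ?thesis using subV dimV P cardV cardR last
    by (intro exI[of _ V]) (simp add: power_mult[symmetric])
qed

end
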